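(* Let $\mathcal X,\mathcal Y$ be Polish spaces, $(\mu,\nu)\in\mathcal P(\mathcal X)\times\mathcal P(\mathcal Y)$ and $C:\mathcal X\times\mathcal P(\mathcal Y)\to\overline{\mathbb{R}}$ measurable. Then the values of \[ \inf_{(X,Y,\mathcal F):\ X\sim\mu,\ Y\sim\nu,\ \mathcal F\supset\sigma(X)}\mathbb E\big[C(X,\mathscr L(Y|\mathcal F))\big] \quad\text{and}\quad \inf_{P\in\Lambda(\mu,\nu)}\int_{\mathcal X\times\mathcal P(\mathcal Y)}C(x,p)\,P(dx,dp) \] coincide, where the first infimum runs over triplets consisting of random variables $X,Y$ and a $\sigma$-algebra $\mathcal F\supset\sigma(X)$ on an arbitrary probability space.
   Context: $\overline{\mathbb{R}}=\mathbb{R}\cup\{\pm\infty\}$; $\mathscr L(Y|\mathcal F)$ denotes the conditional law of $Y$ given $\mathcal F$. The intensity map $\hat I:\mathcal P(\mathcal X\times\mathcal P(\mathcal Y))\to\mathcal P(\mathcal X\times\mathcal Y)$ is defined by $\hat I(P)(f)=\int\int f(x,y)\,p(dy)\,P(dx,dp)$ for bounded continuous $f$, and $\Lambda(\mu,\nu):=\{P\in\mathcal P(\mathcal X\times\mathcal P(\mathcal Y)):\hat I(P)\text{ has marginals }\mu,\nu\}$. *)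

theory Defs
  imports "HOL-Probability.Probability"
begin

definition ereal_expectation :: "'w measure \<Rightarrow> ('w \<Rightarrow> ereal) \<Rightarrow> ereal" where
  "ereal_expectation M f =
     (let p = (\<integral>\<^sup>+ x. e2ennreal (max 0 (f x)) \<partial>M);
          n = (\<integral>\<^sup>+ x. e2ennreal (max 0 (- f x)) \<partial>M)
      in if p = \<infinity> \<and> n = \<infinity> then \<infinity> else enn2ereal p - enn2ereal n)"

definition is_cond_law :: "'w measure \<Rightarrow> 'w measure \<Rightarrow> ('w \<Rightarrow> 'b::topological_space) \<Rightarrow> ('w \<Rightarrow> 'b measure) \<Rightarrow> bool" where
  "is_cond_law M F Y K \<longleftrightarrow>
     K \<in> measurable F (prob_algebra borel) \<and>
     (\<forall>A\<in>sets F. \<forall>B\<in>sets borel.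
        emeasure M (A \<inter> (Y -` B \<inter> space M)) = (\<integral>\<^sup>+ \<omega>. emeasure (K \<omega>) B * indicator A \<omega> \<partial>M))"

text \<open>Intensity map: I(P)(f) = \<integral>\<integral> f(x,y) p(dy) P(dx,dp).\<close>
definition intensity :: "('a::topological_space \<times> 'b::topological_space measure) measure \<Rightarrow> ('a \<times> 'b) measure" where
  "intensity P = P \<bind> (\<lambda>(x, p). distr p (borel \<Otimes>\<^sub>M borel) (\<lambda>y. (x, y)))"

definition Lambda :: "'a::topological_space measure \<Rightarrow> 'b::topological_space measure \<Rightarrow> ('a \<times> 'b measure) measure set" where
  "Lambda \<mu> \<nu> = {P \<in> space (prob_algebra (borel \<Otimes>\<^sub>M prob_algebra borel)).
      distr (intensity P) borel fst = \<mu> \<and> distr (intensity P) borel snd = \<nu>}"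

definition lambda_value :: "'a::topological_space measure \<Rightarrow> 'b::topological_space measure \<Rightarrow> ('a \<times> 'b measure \<Rightarrow> ereal) \<Rightarrow> ereal" where
  "lambda_value \<mu> \<nu> C = (INF P\<in>Lambda \<mu> \<nu>. ereal_expectation P C)"

text \<open>Infimum over triplets (X, Y, F) on probability spaces whose sample space has type 'w.\<close>
definition triplet_value :: "'w itself \<Rightarrow> 'a::topological_space measure \<Rightarrow> 'b::topological_space measure \<Rightarrow> ('a \<times> 'b measure \<Rightarrow> ereal) \<Rightarrow> ereal" where
  "triplet_value _ \<mu> \<nu> C = Inf {ereal_expectation M (\<lambda>\<omega>. C (X \<omega>, K \<omega>)) | (M :: 'w measure) X Y F K.
      prob_space M \<and> X \<in> borel_measurable M \<and> Y \<in> borel_measurable M \<and>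
      distr M borel X = \<mu> \<and> distr M borel Y = \<nu> \<and>
      subalgebra M F \<and> X \<in> borel_measurable F \<and> is_cond_law M F Y K}"

end

theory Submission
  imports Defs
begin


lemma pa_facts:
  assumes "p \<in> space (prob_algebra (borel :: 'b::topological_space measure))"
  shows "prob_space p" "sets p = sets borel" "space p = UNIV"
  using assms by (auto simp: space_prob_algebra dest: sets_eq_imp_space_eq)

lemma kern_meas:
  fixes h :: "'a::topological_space \<Rightarrow> 'b::topological_space measure \<Rightarrow> 'b \<Rightarrow> 'c"
  assumes h: "(\<lambda>((x,p),y). h x p y) \<in> (borel \<Otimes>\<^sub>M prob_algebra borel) \<Otimes>\<^sub>M borel \<rightarrow>\<^sub>M T"
  shows "(\<lambda>(x,p). distr p T (h x p)) \<in> (borel \<Otimes>\<^sub>M prob_algebra borel) \<rightarrow>\<^sub>M prob_algebra T"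
proof -
  have e: "(\<lambda>(x,p). distr p T (h x p)) = (\<lambda>z. distr (snd z) T (h (fst z) (snd z)))" by auto
  have e2: "(\<lambda>(z,y). h (fst z) (snd z) y) = (\<lambda>((x,p),y). h x p y)" by auto
  show ?thesis unfolding e
    by (rule measurable_distr_prob_space2[where M=borel]) (auto simp: e2 h)
qed

lemma kern_sets:
  fixes h :: "'a::topological_space \<Rightarrow> 'b::topological_space measure \<Rightarrow> 'b \<Rightarrow> 'c"
  assumes h: "(\<lambda>((x,p),y). h x p y) \<in> (borel \<Otimes>\<^sub>M prob_algebra borel) \<Otimes>\<^sub>M borel \<rightarrow>\<^sub>M T"
    and P: "P \<in> space (prob_algebra (borel \<Otimes>\<^sub>M prob_algebra borel))"
  shows "sets (P \<bind> (\<lambda>(x,p). distr p T (h x p))) = sets T"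
    "prob_space (P \<bind> (\<lambda>(x,p). distr p T (h x p)))"
  by (rule sets_bind'[OF P kern_meas[OF h]], rule prob_space_bind'[OF P kern_meas[OF h]])

lemma kern_nn:
  fixes h :: "'a::topological_space \<Rightarrow> 'b::topological_space measure \<Rightarrow> 'b \<Rightarrow> 'c"
  assumes h: "(\<lambda>((x,p),y). h x p y) \<in> (borel \<Otimes>\<^sub>M prob_algebra borel) \<Otimes>\<^sub>M borel \<rightarrow>\<^sub>M T"
    and P: "P \<in> space (prob_algebra (borel \<Otimes>\<^sub>M prob_algebra borel))"
    and f: "f \<in> borel_measurable T"
  shows "(\<integral>\<^sup>+\<omega>. f \<omega> \<partial>(P \<bind> (\<lambda>(x,p). distr p T (h x p)))) =
     (\<integral>\<^sup>+z. \<integral>\<^sup>+y. f (h (fst z) (snd z) y) \<partial>(snd z) \<partial>P)"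
proof -
  have sP: "sets P = sets (borel \<Otimes>\<^sub>M prob_algebra borel)"
    using P by (simp add: space_prob_algebra)
  have N: "(\<lambda>(x,p). distr p T (h x p)) \<in> P \<rightarrow>\<^sub>M subprob_algebra T"
    using measurable_prob_algebraD[OF kern_meas[OF h]] sP by (simp cong: measurable_cong_sets)
  have "(\<integral>\<^sup>+\<omega>. f \<omega> \<partial>(P \<bind> (\<lambda>(x,p). distr p T (h x p)))) =
     (\<integral>\<^sup>+z. \<integral>\<^sup>+\<omega>. f \<omega> \<partial>((\<lambda>(x,p). distr p T (h x p)) z) \<partial>P)"
    by (rule nn_integral_bind[OF f N])
  also have "\<dots> = (\<integral>\<^sup>+z. \<integral>\<^sup>+y. f (h (fst z) (snd z) y) \<partial>(snd z) \<partial>P)"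
  proof (rule nn_integral_cong)
    fix z assume z: "z \<in> space P"
    obtain x p where zp: "z = (x,p)" by (cases z)
    have p: "p \<in> space (prob_algebra borel)" using z sP zp
      by (simp add: space_pair_measure sets_eq_imp_space_eq[OF sP])
    have hm: "h x p \<in> p \<rightarrow>\<^sub>M T"
    proof -
      have "(\<lambda>y. (\<lambda>((x,p),y). h x p y) ((x,p),y)) \<in> borel \<rightarrow>\<^sub>M T"
        using z zp sP p
        by (intro measurable_compose[OF _ h] measurable_Pair measurable_const) (auto simp: sets_eq_imp_space_eq[OF sP] space_pair_measure)
      then show ?thesis using pa_facts(2)[OF p] by (simp cong: measurable_cong_sets)
    qed
    show "(\<integral>\<^sup>+\<omega>. f \<omega> \<partial>((\<lambda>(x,p). distr p T (h x p)) z)) = (\<integral>\<^sup>+y. f (h (fst z) (snd z) y) \<partial>(snd z))"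
      using zp hm f by (simp add: nn_integral_distr)
  qed
  finally show ?thesis .
qed

lemma int_h: "(\<lambda>((x,p),y). (x,y)) \<in> ((borel::'a::topological_space measure) \<Otimes>\<^sub>M prob_algebra (borel::'b::topological_space measure)) \<Otimes>\<^sub>M borel \<rightarrow>\<^sub>M borel \<Otimes>\<^sub>M borel"
  unfolding split_beta' by measurable

lemma intensity_facts:
  fixes P :: "('a::topological_space \<times> 'b::topological_space measure) measure"
  assumes P: "P \<in> space (prob_algebra (borel \<Otimes>\<^sub>M prob_algebra borel))"
  shows "sets (intensity P) = sets (borel \<Otimes>\<^sub>M borel)"
    and "B \<in> sets borel \<Longrightarrow> emeasure (distr (intensity P) borel fst) B = (\<integral>\<^sup>+z. indicator B (fst z) \<partial>P)"
    and "D \<in> sets borel \<Longrightarrow> emeasure (distr (intensity P) borel snd) D = (\<integral>\<^sup>+z. emeasure (snd z) D \<partial>P)"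
proof -
  have sP: "sets P = sets (borel \<Otimes>\<^sub>M prob_algebra borel)"
    using P by (simp add: space_prob_algebra)
  note k = kern_sets[OF int_h P] kern_nn[OF int_h P]
  show si: "sets (intensity P) = sets (borel \<Otimes>\<^sub>M borel)"
    unfolding intensity_def using k(1) by simp
  have sp: "space (intensity P) = UNIV"
    using sets_eq_imp_space_eq[OF si] by (simp add: space_pair_measure)
  have zp: "snd z \<in> space (prob_algebra borel)" if "z \<in> space P" for z
    using that sets_eq_imp_space_eq[OF sP] by (auto simp: space_pair_measure)
  { assume B: "B \<in> sets borel"
    have "emeasure (distr (intensity P) borel fst) B = emeasure (intensity P) (fst -` B \<inter> space (intensity P))"
      by (rule emeasure_distr) (auto simp: B measurable_cong_sets[OF si refl])
    also have "\<dots> = (\<integral>\<^sup>+\<omega>. indicator (fst -` B \<inter> space (intensity P)) \<omega> \<partial>intensity P)"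
      by (rule nn_integral_indicator[symmetric], rule measurable_sets[OF _ B]) (simp add: measurable_cong_sets[OF si refl])
    also have "\<dots> = (\<integral>\<^sup>+z. \<integral>\<^sup>+y. indicator B (fst z) \<partial>(snd z) \<partial>P)"
    proof -
      have fs: "fst -` B \<inter> UNIV \<in> sets (borel \<Otimes>\<^sub>M borel)"
        using measurable_sets[OF measurable_fst[of borel borel] B] by (simp add: space_pair_measure)
      show ?thesis unfolding sp unfolding intensity_def
        by (subst k(3)[OF borel_measurable_indicator[OF fs]]) (simp add: indicator_def[abs_def])
    qed
    also have "\<dots> = (\<integral>\<^sup>+z. indicator B (fst z) \<partial>P)"
      by (intro nn_integral_cong) (simp add: prob_space.emeasure_space_1[OF pa_facts(1)[OF zp]])
    finally show "emeasure (distr (intensity P) borel fst) B = (\<integral>\<^sup>+z. indicator B (fst z) \<partial>P)" .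
  }
  { assume D: "D \<in> sets borel"
    have "emeasure (distr (intensity P) borel snd) D = emeasure (intensity P) (snd -` D \<inter> space (intensity P))"
      by (rule emeasure_distr) (auto simp: D measurable_cong_sets[OF si refl])
    also have "\<dots> = (\<integral>\<^sup>+\<omega>. indicator (snd -` D \<inter> space (intensity P)) \<omega> \<partial>intensity P)"
      by (rule nn_integral_indicator[symmetric], rule measurable_sets[OF _ D]) (simp add: measurable_cong_sets[OF si refl])
    also have "\<dots> = (\<integral>\<^sup>+z. \<integral>\<^sup>+y. indicator D y \<partial>(snd z) \<partial>P)"
    proof -
      have fs: "snd -` D \<inter> UNIV \<in> sets (borel \<Otimes>\<^sub>M borel)"
        using measurable_sets[OF measurable_snd[of borel borel] D] by (simp add: space_pair_measure)
      show ?thesis unfolding sp unfolding intensity_def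
        by (subst k(3)[OF borel_measurable_indicator[OF fs]]) (simp add: indicator_def[abs_def])
    qed
    also have "\<dots> = (\<integral>\<^sup>+z. emeasure (snd z) D \<partial>P)"
      by (intro nn_integral_cong nn_integral_indicator) (simp add: pa_facts(2)[OF zp] D)
    finally show "emeasure (distr (intensity P) borel snd) D = (\<integral>\<^sup>+z. emeasure (snd z) D \<partial>P)" .
  }
qed

lemma nnd: "T \<in> M \<rightarrow>\<^sub>M N \<Longrightarrow> f \<in> borel_measurable N \<Longrightarrow> integral\<^sup>N (distr M N T) f = (\<integral>\<^sup>+x. f (T x) \<partial>M)"
  by (metis measurable_distr_eq1 nn_integral_distr)

lemma ee_distr:
  assumes g: "g \<in> M \<rightarrow>\<^sub>M N" and C: "C \<in> borel_measurable N"
  shows "ereal_expectation (distr M N g) C = ereal_expectation M (\<lambda>\<omega>. C (g \<omega>))"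
proof -
  have m1: "(\<lambda>x. e2ennreal (max 0 (C x))) \<in> borel_measurable N" using C by measurable
  have m2: "(\<lambda>x. e2ennreal (max 0 (- C x))) \<in> borel_measurable N" using C by measurable
  show ?thesis unfolding ereal_expectation_def
    using g m1 m2 by (simp add: nn_integral_distr)
qed



lemma dir1:
  fixes M :: "'w measure" and X :: "'w \<Rightarrow> 'a::topological_space" and Y :: "'w \<Rightarrow> 'b::topological_space"
    and K :: "'w \<Rightarrow> 'b measure" and C :: "'a \<times> 'b measure \<Rightarrow> ereal"
  assumes M: "prob_space M" and Xm: "X \<in> borel_measurable M" and Ym: "Y \<in> borel_measurable M"
    and Xd: "distr M borel X = \<mu>" and Yd: "distr M borel Y = \<nu>"
    and sub: "subalgebra M F" and XF: "X \<in> borel_measurable F" and cl: "is_cond_law M F Y K"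
    and C: "C \<in> borel_measurable (borel \<Otimes>\<^sub>M prob_algebra borel)"
  shows "distr M (borel \<Otimes>\<^sub>M prob_algebra borel) (\<lambda>\<omega>. (X \<omega>, K \<omega>)) \<in> Lambda \<mu> \<nu>"
    "ereal_expectation M (\<lambda>\<omega>. C (X \<omega>, K \<omega>)) = ereal_expectation (distr M (borel \<Otimes>\<^sub>M prob_algebra borel) (\<lambda>\<omega>. (X \<omega>, K \<omega>))) C"
proof -
  have KF: "K \<in> F \<rightarrow>\<^sub>M prob_algebra borel" using cl by (simp add: is_cond_law_def)
  have cl2: "\<And>A B. A \<in> sets F \<Longrightarrow> B \<in> sets borel \<Longrightarrow>
     emeasure M (A \<inter> (Y -` B \<inter> space M)) = (\<integral>\<^sup>+ \<omega>. emeasure (K \<omega>) B * indicator A \<omega> \<partial>M)"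
    using cl by (simp add: is_cond_law_def)
  have gm: "(\<lambda>\<omega>. (X \<omega>, K \<omega>)) \<in> M \<rightarrow>\<^sub>M (borel \<Otimes>\<^sub>M prob_algebra borel)"
    using measurable_from_subalg[OF sub XF] measurable_from_subalg[OF sub KF] by (rule measurable_Pair)
  define P where "P = distr M (borel \<Otimes>\<^sub>M prob_algebra borel) (\<lambda>\<omega>. (X \<omega>, K \<omega>))"
  have P: "P \<in> space (prob_algebra (borel \<Otimes>\<^sub>M prob_algebra borel))"
    unfolding P_def space_prob_algebra using prob_space.prob_space_distr[OF M gm] by simp
  have sF: "space F = space M" using sub by (simp add: subalgebra_def)
  have d1: "distr (intensity P) borel fst = \<mu>"
  proof (rule measure_eqI)
    show "sets (distr (intensity P) borel fst) = sets \<mu>" using Xd by auto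
    fix B assume "B \<in> sets (distr (intensity P) borel fst)"
    then have B: "B \<in> sets borel" by simp
    have mB: "(\<lambda>z. indicator B (fst z)) \<in> borel_measurable (borel \<Otimes>\<^sub>M prob_algebra borel)"
      using B by measurable
    have "emeasure (distr (intensity P) borel fst) B = (\<integral>\<^sup>+z. indicator B (fst z) \<partial>P)"
      by (rule intensity_facts(2)[OF P B])
    also have "\<dots> = (\<integral>\<^sup>+\<omega>. indicator B (X \<omega>) \<partial>M)"
      unfolding P_def by (simp add: nnd[OF gm mB])
    also have "\<dots> = (\<integral>\<^sup>+\<omega>. indicator (X -` B \<inter> space M) \<omega> \<partial>M)"
      by (rule nn_integral_cong) (simp split: split_indicator)
    also have "\<dots> = emeasure M (X -` B \<inter> space M)"
      using measurable_sets[OF Xm B] by simp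
    also have "\<dots> = emeasure \<mu> B"
      using Xd emeasure_distr[OF Xm B] by simp
    finally show "emeasure (distr (intensity P) borel fst) B = emeasure \<mu> B" .
  qed
  have d2: "distr (intensity P) borel snd = \<nu>"
  proof (rule measure_eqI)
    show "sets (distr (intensity P) borel snd) = sets \<nu>" using Yd by auto
    fix B assume "B \<in> sets (distr (intensity P) borel snd)"
    then have B: "B \<in> sets borel" by simp
    have mB: "(\<lambda>z. emeasure (snd z) B) \<in> borel_measurable (borel \<Otimes>\<^sub>M prob_algebra borel)"
      by (rule measurable_compose[OF measurable_prob_algebraD[OF measurable_snd] measurable_emeasure_subprob_algebra[OF B]])
    have "emeasure (distr (intensity P) borel snd) B = (\<integral>\<^sup>+z. emeasure (snd z) B \<partial>P)"
      by (rule intensity_facts(3)[OF P B])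
    also have "\<dots> = (\<integral>\<^sup>+\<omega>. emeasure (K \<omega>) B \<partial>M)"
      unfolding P_def by (simp add: nnd[OF gm mB])
    also have "\<dots> = (\<integral>\<^sup>+\<omega>. emeasure (K \<omega>) B * indicator (space M) \<omega> \<partial>M)"
      by (rule nn_integral_cong) simp
    also have "\<dots> = emeasure M (space M \<inter> (Y -` B \<inter> space M))"
      using cl2[OF _ B, of "space M"] sF sets.top[of F] by simp
    also have "\<dots> = emeasure \<nu> B"
      using Yd emeasure_distr[OF Ym B] by (simp add: Int_absorb1)
    finally show "emeasure (distr (intensity P) borel snd) B = emeasure \<nu> B" .
  qed
  show "distr M (borel \<Otimes>\<^sub>M prob_algebra borel) (\<lambda>\<omega>. (X \<omega>, K \<omega>)) \<in> Lambda \<mu> \<nu>"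
    using P d1 d2 unfolding P_def Lambda_def by simp
  show "ereal_expectation M (\<lambda>\<omega>. C (X \<omega>, K \<omega>)) = ereal_expectation (distr M (borel \<Otimes>\<^sub>M prob_algebra borel) (\<lambda>\<omega>. (X \<omega>, K \<omega>))) C"
    using ee_distr[OF gm C] by simp
qed



lemma hm3: "(\<lambda>((x,p),y). (x,p,y)) \<in> ((borel::'a::topological_space measure) \<Otimes>\<^sub>M prob_algebra (borel::'b::topological_space measure)) \<Otimes>\<^sub>M borel \<rightarrow>\<^sub>M borel \<Otimes>\<^sub>M (prob_algebra borel \<Otimes>\<^sub>M borel)"
  unfolding split_beta' by measurable

lemma dir2:
  fixes P :: "('a::topological_space \<times> 'b::topological_space measure) measure"
    and C :: "'a \<times> 'b measure \<Rightarrow> ereal"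
  assumes PL: "P \<in> Lambda \<mu> \<nu>" and smu: "sets \<mu> = sets borel" and snu: "sets \<nu> = sets borel"
    and C: "C \<in> borel_measurable (borel \<Otimes>\<^sub>M prob_algebra borel)"
  shows "\<exists>(M :: ('a \<times> 'b measure \<times> 'b) measure) X Y F K. ereal_expectation P C = ereal_expectation M (\<lambda>\<omega>. C (X \<omega>, K \<omega>)) \<and>
      prob_space M \<and> X \<in> borel_measurable M \<and> Y \<in> borel_measurable M \<and>
      distr M borel X = \<mu> \<and> distr M borel Y = \<nu> \<and>
      subalgebra M F \<and> X \<in> borel_measurable F \<and> is_cond_law M F Y K"
proof -
  have P: "P \<in> space (prob_algebra (borel \<Otimes>\<^sub>M prob_algebra borel))"
    and m1: "distr (intensity P) borel fst = \<mu>" and m2: "distr (intensity P) borel snd = \<nu>"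
    using PL by (auto simp: Lambda_def)
  have sP: "sets P = sets (borel \<Otimes>\<^sub>M prob_algebra borel)"
    using P by (simp add: space_prob_algebra)
  have spP: "space P = UNIV \<times> space (prob_algebra borel)"
    using sets_eq_imp_space_eq[OF sP] by (simp add: space_pair_measure)
  have zp: "snd z \<in> space (prob_algebra borel)" if "z \<in> space P" for z
    using that spP by auto
  define M :: "('a \<times> 'b measure \<times> 'b) measure" where
    "M = P \<bind> (\<lambda>(x,p). distr p (borel \<Otimes>\<^sub>M (prob_algebra borel \<Otimes>\<^sub>M borel)) (\<lambda>y. (x,p,y)))"
  note k = kern_sets[OF hm3 P, folded M_def] kern_nn[OF hm3 P, folded M_def]
  have sM: "sets M = sets (borel \<Otimes>\<^sub>M (prob_algebra borel \<Otimes>\<^sub>M borel))" by (rule k(1))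
  have spM: "space M = UNIV \<times> space (prob_algebra borel) \<times> UNIV"
    using sets_eq_imp_space_eq[OF sM] by (simp add: space_pair_measure)
  have em: "emeasure M E = (\<integral>\<^sup>+z. \<integral>\<^sup>+y. indicator E (fst z, snd z, y) \<partial>(snd z) \<partial>P)"
    if E: "E \<in> sets M" for E
  proof -
    have "emeasure M E = (\<integral>\<^sup>+\<omega>. indicator E \<omega> \<partial>M)" using E by simp
    also have "\<dots> = (\<integral>\<^sup>+z. \<integral>\<^sup>+y. indicator E (fst z, snd z, y) \<partial>(snd z) \<partial>P)"
      by (rule k(3)) (use E sM in simp)
    finally show ?thesis .
  qed
  have Xm: "fst \<in> borel_measurable M"
    by (simp add: measurable_cong_sets[OF sM refl])
  have Ym: "(\<lambda>\<omega>. snd (snd \<omega>)) \<in> borel_measurable M"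
    by (simp add: measurable_cong_sets[OF sM refl])
  have gM: "(\<lambda>\<omega>. (fst \<omega>, fst (snd \<omega>))) \<in> M \<rightarrow>\<^sub>M (borel \<Otimes>\<^sub>M prob_algebra borel)"
    by (simp add: measurable_cong_sets[OF sM refl])
  have gsp: "(\<lambda>\<omega>. (fst \<omega>, fst (snd \<omega>))) \<in> space M \<rightarrow> space (borel \<Otimes>\<^sub>M prob_algebra borel)"
    using spM by (auto simp: space_pair_measure)
  define F where "F = vimage_algebra (space M) (\<lambda>\<omega>. (fst \<omega>, fst (snd \<omega>))) (borel \<Otimes>\<^sub>M prob_algebra borel)"
  have sF: "sets F = {(\<lambda>\<omega>. (fst \<omega>, fst (snd \<omega>))) -` A \<inter> space M | A. A \<in> sets (borel \<Otimes>\<^sub>M prob_algebra borel)}"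
    unfolding F_def by (rule sets_vimage_algebra2[OF gsp])
  have gF: "(\<lambda>\<omega>. (fst \<omega>, fst (snd \<omega>))) \<in> F \<rightarrow>\<^sub>M (borel \<Otimes>\<^sub>M prob_algebra borel)"
    unfolding F_def by (rule measurable_vimage_algebra1[OF gsp])
  have sub: "subalgebra M F"
    unfolding subalgebra_def
  proof
    show "space F = space M" by (simp add: F_def)
    show "sets F \<subseteq> sets M" unfolding sF using measurable_sets[OF gM] by blast
  qed
  have XF: "fst \<in> borel_measurable F"
    using measurable_compose[OF gF measurable_fst] by simp
  have KF: "(\<lambda>\<omega>. fst (snd \<omega>)) \<in> F \<rightarrow>\<^sub>M prob_algebra borel"
    using measurable_compose[OF gF measurable_snd] by simp
  have pr: "prob_space M" by (rule k(2))
  have dX: "distr M borel fst = \<mu>"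
  proof (rule measure_eqI)
    show "sets (distr M borel fst) = sets \<mu>" using smu by simp
    fix B assume "B \<in> sets (distr M borel fst)"
    then have B: "B \<in> sets borel" by simp
    have "emeasure (distr M borel fst) B = emeasure M (fst -` B \<inter> space M)"
      by (rule emeasure_distr[OF Xm B])
    also have "\<dots> = (\<integral>\<^sup>+z. \<integral>\<^sup>+y. indicator (fst -` B \<inter> space M) (fst z, snd z, y) \<partial>(snd z) \<partial>P)"
      by (rule em) (rule measurable_sets[OF Xm B])
    also have "\<dots> = (\<integral>\<^sup>+z. indicator B (fst z) \<partial>P)"
    proof (rule nn_integral_cong)
      fix z assume z: "z \<in> space P"
      have "(\<integral>\<^sup>+y. indicator (fst -` B \<inter> space M) (fst z, snd z, y) \<partial>(snd z)) = (\<integral>\<^sup>+y. indicator B (fst z) \<partial>(snd z))"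
        using zp[OF z] spM by (intro nn_integral_cong) (simp split: split_indicator)
      also have "\<dots> = indicator B (fst z)"
        using pa_facts[OF zp[OF z]] prob_space.emeasure_space_1[OF pa_facts(1)[OF zp[OF z]]] by simp
      finally show "(\<integral>\<^sup>+y. indicator (fst -` B \<inter> space M) (fst z, snd z, y) \<partial>(snd z)) = indicator B (fst z)" .
    qed
    also have "\<dots> = emeasure \<mu> B"
      using intensity_facts(2)[OF P B] m1 by simp
    finally show "emeasure (distr M borel fst) B = emeasure \<mu> B" .
  qed
  have dY: "distr M borel (\<lambda>\<omega>. snd (snd \<omega>)) = \<nu>"
  proof (rule measure_eqI)
    show "sets (distr M borel (\<lambda>\<omega>. snd (snd \<omega>))) = sets \<nu>" using snu by simp
    fix B assume "B \<in> sets (distr M borel (\<lambda>\<omega>. snd (snd \<omega>)))"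
    then have B: "B \<in> sets borel" by simp
    have "emeasure (distr M borel (\<lambda>\<omega>. snd (snd \<omega>))) B = emeasure M ((\<lambda>\<omega>. snd (snd \<omega>)) -` B \<inter> space M)"
      by (rule emeasure_distr[OF Ym B])
    also have "\<dots> = (\<integral>\<^sup>+z. \<integral>\<^sup>+y. indicator ((\<lambda>\<omega>. snd (snd \<omega>)) -` B \<inter> space M) (fst z, snd z, y) \<partial>(snd z) \<partial>P)"
      by (rule em) (rule measurable_sets[OF Ym B])
    also have "\<dots> = (\<integral>\<^sup>+z. emeasure (snd z) B \<partial>P)"
    proof (rule nn_integral_cong)
      fix z assume z: "z \<in> space P"
      have "(\<integral>\<^sup>+y. indicator ((\<lambda>\<omega>. snd (snd \<omega>)) -` B \<inter> space M) (fst z, snd z, y) \<partial>(snd z)) = (\<integral>\<^sup>+y. indicator B y \<partial>(snd z))"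
        using zp[OF z] spM by (intro nn_integral_cong) (simp split: split_indicator)
      also have "\<dots> = emeasure (snd z) B"
        using pa_facts[OF zp[OF z]] B by simp
      finally show "(\<integral>\<^sup>+y. indicator ((\<lambda>\<omega>. snd (snd \<omega>)) -` B \<inter> space M) (fst z, snd z, y) \<partial>(snd z)) = emeasure (snd z) B" .
    qed
    also have "\<dots> = emeasure \<nu> B"
      using intensity_facts(3)[OF P B] m2 by simp
    finally show "emeasure (distr M borel (\<lambda>\<omega>. snd (snd \<omega>))) B = emeasure \<nu> B" .
  qed
  have cl: "is_cond_law M F (\<lambda>\<omega>. snd (snd \<omega>)) (\<lambda>\<omega>. fst (snd \<omega>))"
    unfolding is_cond_law_def
  proof (intro conjI KF ballI)
    fix A B assume A: "A \<in> sets F" and B: "B \<in> sets (borel :: 'b measure)"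
    obtain A' where A': "A' \<in> sets (borel \<Otimes>\<^sub>M prob_algebra borel)"
      and AA: "A = (\<lambda>\<omega>. (fst \<omega>, fst (snd \<omega>))) -` A' \<inter> space M"
      using A sF by auto
    have AM: "A \<in> sets M" using A sub by (auto simp: subalgebra_def)
    have ind: "indicator A (fst z, snd z, y) = (indicator A' z :: ennreal)" if "z \<in> space P" for z y
      using zp[OF that] spM AA by (cases z) (simp split: split_indicator)
    have "emeasure M (A \<inter> ((\<lambda>\<omega>. snd (snd \<omega>)) -` B \<inter> space M)) =
       (\<integral>\<^sup>+z. \<integral>\<^sup>+y. indicator (A \<inter> ((\<lambda>\<omega>. snd (snd \<omega>)) -` B \<inter> space M)) (fst z, snd z, y) \<partial>(snd z) \<partial>P)"
      by (rule em) (intro sets.Int AM measurable_sets[OF Ym B])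
    also have "\<dots> = (\<integral>\<^sup>+z. indicator A' z * emeasure (snd z) B \<partial>P)"
    proof (rule nn_integral_cong)
      fix z assume z: "z \<in> space P"
      have "(\<integral>\<^sup>+y. indicator (A \<inter> ((\<lambda>\<omega>. snd (snd \<omega>)) -` B \<inter> space M)) (fst z, snd z, y) \<partial>(snd z))
         = (\<integral>\<^sup>+y. indicator A (fst z, snd z, y) * indicator B y \<partial>(snd z))"
        using zp[OF z] spM by (intro nn_integral_cong) (simp add: indicator_def)
      also have "\<dots> = (\<integral>\<^sup>+y. indicator A' z * indicator B y \<partial>(snd z))"
        by (simp only: ind[OF z])
      also have "\<dots> = indicator A' z * emeasure (snd z) B"
        using pa_facts[OF zp[OF z]] B by (simp add: nn_integral_cmult)
      finally show "(\<integral>\<^sup>+y. indicator (A \<inter> ((\<lambda>\<omega>. snd (snd \<omega>)) -` B \<inter> space M)) (fst z, snd z, y) \<partial>(snd z))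
         = indicator A' z * emeasure (snd z) B" .
    qed
    also have "\<dots> = (\<integral>\<^sup>+z. \<integral>\<^sup>+y. emeasure (fst (snd (fst z, snd z, y))) B * indicator A (fst z, snd z, y) \<partial>(snd z) \<partial>P)"
    proof (rule nn_integral_cong)
      fix z assume z: "z \<in> space P"
      show "indicator A' z * emeasure (snd z) B = (\<integral>\<^sup>+y. emeasure (fst (snd (fst z, snd z, y))) B * indicator A (fst z, snd z, y) \<partial>(snd z))"
        using ind[OF z] pa_facts[OF zp[OF z]] prob_space.emeasure_space_1[OF pa_facts(1)[OF zp[OF z]]]
        by (simp add: mult.commute)
    qed
    also have "\<dots> = (\<integral>\<^sup>+\<omega>. emeasure (fst (snd \<omega>)) B * indicator A \<omega> \<partial>M)"
    proof -
      have mf: "(\<lambda>\<omega>. emeasure (fst (snd \<omega>)) B * indicator A \<omega>) \<in> borel_measurable (borel \<Otimes>\<^sub>M (prob_algebra borel \<Otimes>\<^sub>M borel))"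
      proof (rule borel_measurable_times_ennreal)
        show "(\<lambda>\<omega>. emeasure (fst (snd \<omega>)) B) \<in> borel_measurable (borel \<Otimes>\<^sub>M (prob_algebra borel \<Otimes>\<^sub>M borel))"
          by (rule measurable_compose[OF measurable_prob_algebraD[OF measurable_compose[OF measurable_snd measurable_fst]] measurable_emeasure_subprob_algebra[OF B]])
        show "indicator A \<in> borel_measurable (borel \<Otimes>\<^sub>M (prob_algebra borel \<Otimes>\<^sub>M borel))"
          using AM sM by simp
      qed
      show ?thesis by (rule k(3)[symmetric, OF mf])
    qed
    finally show "emeasure M (A \<inter> ((\<lambda>\<omega>. snd (snd \<omega>)) -` B \<inter> space M)) = (\<integral>\<^sup>+\<omega>. emeasure (fst (snd \<omega>)) B * indicator A \<omega> \<partial>M)" .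
  qed
  have dP: "distr M (borel \<Otimes>\<^sub>M prob_algebra borel) (\<lambda>\<omega>. (fst \<omega>, fst (snd \<omega>))) = P"
  proof (rule measure_eqI)
    show "sets (distr M (borel \<Otimes>\<^sub>M prob_algebra borel) (\<lambda>\<omega>. (fst \<omega>, fst (snd \<omega>)))) = sets P" using sP by simp
    fix A assume "A \<in> sets (distr M (borel \<Otimes>\<^sub>M prob_algebra borel) (\<lambda>\<omega>. (fst \<omega>, fst (snd \<omega>))))"
    then have A: "A \<in> sets (borel \<Otimes>\<^sub>M prob_algebra borel)" by simp
    have "emeasure (distr M (borel \<Otimes>\<^sub>M prob_algebra borel) (\<lambda>\<omega>. (fst \<omega>, fst (snd \<omega>)))) A
        = emeasure M ((\<lambda>\<omega>. (fst \<omega>, fst (snd \<omega>))) -` A \<inter> space M)"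
      by (rule emeasure_distr[OF gM A])
    also have "\<dots> = (\<integral>\<^sup>+z. \<integral>\<^sup>+y. indicator ((\<lambda>\<omega>. (fst \<omega>, fst (snd \<omega>))) -` A \<inter> space M) (fst z, snd z, y) \<partial>(snd z) \<partial>P)"
      by (rule em) (rule measurable_sets[OF gM A])
    also have "\<dots> = (\<integral>\<^sup>+z. indicator A z \<partial>P)"
    proof (rule nn_integral_cong)
      fix z assume z: "z \<in> space P"
      have "(\<integral>\<^sup>+y. indicator ((\<lambda>\<omega>. (fst \<omega>, fst (snd \<omega>))) -` A \<inter> space M) (fst z, snd z, y) \<partial>(snd z)) = (\<integral>\<^sup>+y. indicator A z \<partial>(snd z))"
        using zp[OF z] spM by (intro nn_integral_cong) (cases z, simp split: split_indicator)
      also have "\<dots> = indicator A z"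
        using pa_facts[OF zp[OF z]] prob_space.emeasure_space_1[OF pa_facts(1)[OF zp[OF z]]] by simp
      finally show "(\<integral>\<^sup>+y. indicator ((\<lambda>\<omega>. (fst \<omega>, fst (snd \<omega>))) -` A \<inter> space M) (fst z, snd z, y) \<partial>(snd z)) = indicator A z" .
    qed
    also have "\<dots> = emeasure P A" using A sP by simp
    finally show "emeasure (distr M (borel \<Otimes>\<^sub>M prob_algebra borel) (\<lambda>\<omega>. (fst \<omega>, fst (snd \<omega>)))) A = emeasure P A" .
  qed
  have ee: "ereal_expectation P C = ereal_expectation M (\<lambda>\<omega>. C (fst \<omega>, fst (snd \<omega>)))"
    using ee_distr[OF gM C] dP by simp
  show ?thesis
    by (rule exI[of _ M], rule exI[of _ fst], rule exI[of _ "\<lambda>\<omega>. snd (snd \<omega>)"], rule exI[of _ F],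
        rule exI[of _ "\<lambda>\<omega>. fst (snd \<omega>)"]) (use ee pr Xm Ym dX dY sub XF cl in simp)
qed



lemma part1:
  fixes \<mu> :: "'a::topological_space measure" and \<nu> :: "'b::topological_space measure"
    and C :: "'a \<times> 'b measure \<Rightarrow> ereal"
  assumes C: "C \<in> borel_measurable (borel \<Otimes>\<^sub>M prob_algebra borel)"
  shows "lambda_value \<mu> \<nu> C \<le> triplet_value TYPE('w) \<mu> \<nu> C"
  unfolding triplet_value_def lambda_value_def
proof (rule Inf_greatest)
  fix e assume "e \<in> {ereal_expectation M (\<lambda>\<omega>. C (X \<omega>, K \<omega>)) | (M :: 'w measure) X Y F K.
      prob_space M \<and> X \<in> borel_measurable M \<and> Y \<in> borel_measurable M \<and>
      distr M borel X = \<mu> \<and> distr M borel Y = \<nu> \<and>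
      subalgebra M F \<and> X \<in> borel_measurable F \<and> is_cond_law M F Y K}"
  then obtain M :: "'w measure" and X Y F K where e: "e = ereal_expectation M (\<lambda>\<omega>. C (X \<omega>, K \<omega>))"
    and h: "prob_space M" "X \<in> borel_measurable M" "Y \<in> borel_measurable M"
      "distr M borel X = \<mu>" "distr M borel Y = \<nu>"
      "subalgebra M F" "X \<in> borel_measurable F" "is_cond_law M F Y K"
    by blast
  note d = dir1[OF h C]
  show "(INF P\<in>Lambda \<mu> \<nu>. ereal_expectation P C) \<le> e"
    unfolding e d(2) by (rule INF_lower[OF d(1)])
qed

lemma part2:
  fixes \<mu> :: "'a::topological_space measure" and \<nu> :: "'b::topological_space measure"
    and C :: "'a \<times> 'b measure \<Rightarrow> ereal"
  assumes smu: "sets \<mu> = sets borel" and snu: "sets \<nu> = sets borel"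
    and C: "C \<in> borel_measurable (borel \<Otimes>\<^sub>M prob_algebra borel)"
  shows "triplet_value TYPE('a \<times> 'b measure \<times> 'b) \<mu> \<nu> C \<le> lambda_value \<mu> \<nu> C"
  unfolding triplet_value_def lambda_value_def
proof (rule INF_greatest)
  fix P assume P: "P \<in> Lambda \<mu> \<nu>"
  obtain M :: "('a \<times> 'b measure \<times> 'b) measure" and X Y F K where
    h: "ereal_expectation P C = ereal_expectation M (\<lambda>\<omega>. C (X \<omega>, K \<omega>))"
      "prob_space M \<and> X \<in> borel_measurable M \<and> Y \<in> borel_measurable M \<and>
      distr M borel X = \<mu> \<and> distr M borel Y = \<nu> \<and>
      subalgebra M F \<and> X \<in> borel_measurable F \<and> is_cond_law M F Y K"
    using dir2[OF P smu snu C] by blast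
  show "Inf {ereal_expectation M (\<lambda>\<omega>. C (X \<omega>, K \<omega>)) | (M :: ('a \<times> 'b measure \<times> 'b) measure) X Y F K.
      prob_space M \<and> X \<in> borel_measurable M \<and> Y \<in> borel_measurable M \<and>
      distr M borel X = \<mu> \<and> distr M borel Y = \<nu> \<and>
      subalgebra M F \<and> X \<in> borel_measurable F \<and> is_cond_law M F Y K} \<le> ereal_expectation P C"
    by (rule Inf_lower) (use h in blast)
qed

theorem corollary3p3:
  fixes \<mu> :: "'a::polish_space measure" and \<nu> :: "'b::polish_space measure"
    and C :: "'a \<times> 'b measure \<Rightarrow> ereal"
  assumes "prob_space \<mu>" "sets \<mu> = sets borel"
    and "prob_space \<nu>" "sets \<nu> = sets borel"
    and "C \<in> borel_measurable (borel \<Otimes>\<^sub>M prob_algebra borel)"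
  shows "lambda_value \<mu> \<nu> C \<le> triplet_value TYPE('w) \<mu> \<nu> C
    \<and> triplet_value TYPE('a \<times> 'b measure \<times> 'b) \<mu> \<nu> C = lambda_value \<mu> \<nu> C"
  using part1[OF assms(5), where 'w='w] part1[OF assms(5), where 'w="'a \<times> 'b measure \<times> 'b"]
    part2[OF assms(2,4,5)] by (simp add: antisym)

end
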